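(* Let $k\ge1$ be an integer. Then $P_k(0,4,0)\not\equiv0\pmod p$ for every odd prime $p>k+2r-2$.
   Context: Fix an integer $r\ge1$ and indeterminates $\alpha,\beta,\gamma$. Define polynomials $c_n=c_n(\alpha,\beta,\gamma)\in\mathbb{Q}[\alpha,\beta,\gamma]$ by $c_n=0$ for $n<0$, $c_0=1$, and for every integer $n\ge-3$, $$(n+4)c_{n+4}+(2n+6-r)\alpha c_{n+3}+\left[(n+2-r)\alpha^2+(2n+5-2r)\frac{\alpha^2-\beta}{4}\right]c_{n+2}+\left[(2n+3-3r)\alpha\frac{\alpha^2-\beta}{4}+\frac{\gamma}{2}\right]c_{n+1}+\frac{1}{16}(\alpha^2-\beta)^2(n+1-2r)c_n=0.$$ For $k\ge1$ define $P_k(\alpha,\beta,\gamma):=\det\big(c_{k+2r-1+j-i}\big)_{1\le i,j\le k}$. $P_k(0,4,0)$ is its value at $\alpha=0,\beta=4,\gamma=0$, a rational number; $x\not\equiv0\pmod p$ means $x$ has denominator prime to $p$ and $x\notin p\mathbb{Z}_{(p)}$. *)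

theory Defs
  imports "Jordan_Normal_Form.Determinant"
begin

text \<open>The polynomials c_n, evaluated at (alpha, beta, gamma) = (a, b, g) in Q^3.
  Equation for index N = m+1 = n+4 (n = m - 3 >= -3):
  N c_N + (2n+6-r) a c_(N-1) + [(n+2-r) a^2 + (2n+5-2r)(a^2-b)/4] c_(N-2)
   + [(2n+3-3r) a (a^2-b)/4 + g/2] c_(N-3) + (1/16)(a^2-b)^2 (n+1-2r) c_(N-4) = 0,
  with c_j = 0 for j < 0 and c_0 = 1.\<close>

fun cseq :: "nat \<Rightarrow> rat \<Rightarrow> rat \<Rightarrow> rat \<Rightarrow> nat \<Rightarrow> rat" where
  "cseq r a b g 0 = 1"
| "cseq r a b g (Suc m) =
     - ( (2 * (of_int (int m) - 3) + 6 - of_nat r) * a * cseq r a b g m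
       + (if 1 \<le> m then
            ((of_int (int m) - 3 + 2 - of_nat r) * a^2
              + (2 * (of_int (int m) - 3) + 5 - 2 * of_nat r) * ((a^2 - b) / 4))
            * cseq r a b g (m - 1) else 0)
       + (if 2 \<le> m then
            ((2 * (of_int (int m) - 3) + 3 - 3 * of_nat r) * a * ((a^2 - b) / 4) + g / 2)
            * cseq r a b g (m - 2) else 0)
       + (if 3 \<le> m then
            (1/16) * (a^2 - b)^2 * (of_int (int m) - 3 + 1 - 2 * of_nat r)
            * cseq r a b g (m - 3) else 0)
       ) / of_nat (Suc m)"

definition cc :: "nat \<Rightarrow> rat \<Rightarrow> rat \<Rightarrow> rat \<Rightarrow> int \<Rightarrow> rat" where
  "cc r a b g n = (if n < 0 then 0 else cseq r a b g (nat n))"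

text \<open>P_k(a,b,g) = det (c_(k+2r-1+j-i))_(1<=i,j<=k) (0-based indices here; only j-i matters).\<close>
definition Pk :: "nat \<Rightarrow> nat \<Rightarrow> rat \<Rightarrow> rat \<Rightarrow> rat \<Rightarrow> rat" where
  "Pk r k a b g = det (mat k k (\<lambda>(i, j). cc r a b g (int k + 2 * int r - 1 + int j - int i)))"

definition nonzero_mod :: "nat \<Rightarrow> rat \<Rightarrow> bool" where
  "nonzero_mod p x = (case quotient_of x of (u, v) \<Rightarrow> \<not> int p dvd u \<and> \<not> int p dvd v)"

end

theory Submission
  imports Defs "HOL-Computational_Algebra.Formal_Power_Series" "HOL-Computational_Algebra.Primes"
begin

lemma gch_Suc: "(x::'a::field_char_0) gchoose (Suc j) = (x gchoose j) * (x - of_nat j) / of_nat (Suc j)"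
proof -
  have "fact (Suc j) * (x gchoose Suc j) = (\<Prod>i = 0..<Suc j. x - of_nat i)" by (rule gbinomial_mult_fact)
  also have "\<dots> = (\<Prod>i = 0..<j. x - of_nat i) * (x - of_nat j)" by simp
  also have "\<dots> = fact j * (x gchoose j) * (x - of_nat j)" by (simp add: gbinomial_mult_fact)
  finally have eq: "fact (Suc j) * (x gchoose Suc j) = fact j * (x gchoose j) * (x - of_nat j)" .
  have "x gchoose Suc j = fact j * (x gchoose j) * (x - of_nat j) / fact (Suc j)"
    by (metis eq fact_nonzero nonzero_mult_div_cancel_left)
  also have "\<dots> = (x gchoose j) * (x - of_nat j) / of_nat (Suc j)"
    by (simp only: fact_Suc of_nat_mult) (simp add: field_simps del: of_nat_Suc)
  finally show ?thesis .
qed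

definition aa :: "nat \<Rightarrow> rat" where "aa r = of_nat r - 1/2"
definition dd :: "nat \<Rightarrow> nat \<Rightarrow> rat" where "dd r j = (-1)^j * (aa r gchoose j)"

lemma dd_rec1: "2 * dd r 1 = (1 - 2 * of_nat r) * dd r 0"
  by (simp add: dd_def aa_def)

lemma dd_key: "(n::rat) \<ge> 0 \<Longrightarrow> (2*n+4)*(s*(g*(R-1/2-n)/(n+1)*(R-1/2-n-1)/(n+2))) = (4*n+5-2*R)*(-s*(g*(R-1/2-n)/(n+1))) - (2*n+1-2*R)*(s*g)"
proof -
  assume "n \<ge> 0"
  then have "n + 1 \<noteq> 0" "n + 2 \<noteq> 0" by auto
  have "0 \<le> n * (n * 4)" using \<open>n \<ge> 0\<close> by simp
  then have "8 + (n * 12 + n * (n * 4)) \<noteq> 0" using \<open>n \<ge> 0\<close> by linarith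
  note nz = this \<open>n + 1 \<noteq> 0\<close> \<open>n + 2 \<noteq> 0\<close>
  then show ?thesis using nz by (simp add: field_simps)
qed

lemma dd_rec: "(2 * of_nat j + 4) * dd r (j+2) = (4 * of_nat j + 5 - 2 * of_nat r) * dd r (j+1) - (2 * of_nat j + 1 - 2 * of_nat r) * dd r j"
proof -
  define G where "G = aa r gchoose j"
  define x where "x = aa r"
  have e1: "aa r gchoose (Suc j) = G * (x - of_nat j) / (of_nat j + 1)"
    using gch_Suc[of "aa r" j] unfolding G_def x_def by simp
  have e2: "aa r gchoose (Suc (Suc j)) = G * (x - of_nat j) / (of_nat j + 1) * (x - of_nat j - 1) / (of_nat j + 2)"
    using gch_Suc[of "aa r" "Suc j"] unfolding e1 by (simp add: add_ac x_def)
  have d0: "dd r j = (- 1) ^ j * G" unfolding dd_def G_def by simp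
  have d1: "dd r (j+1) = - ((- 1) ^ j * (G * (x - of_nat j) / (of_nat j + 1)))" unfolding dd_def by (simp add: e1)
  have d2: "dd r (j+2) = (- 1) ^ j * (G * (x - of_nat j) / (of_nat j + 1) * (x - of_nat j - 1) / (of_nat j + 2))"
    unfolding dd_def by (simp add: e2 numeral_2_eq_2)
  have xx: "x = of_nat r - 1/2" unfolding x_def aa_def ..
  show ?thesis unfolding d0 d1 d2 xx
    using dd_key[of "of_nat j" "(- 1) ^ j" G "of_nat r"] by (simp add: mult.assoc diff_diff_add)
qed

lemma cseq_val: "cseq r 0 4 0 n = (if even n then dd r (n div 2) else 0)"
proof (induction n rule: less_induct)
  case (less n)
  show ?case
  proof (cases n)
    case 0 then show ?thesis by (simp add: dd_def)
  next
    case (Suc m)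
    show ?thesis
    proof (cases "m \<ge> 3")
      case True
      have IH1: "cseq r 0 4 0 (m-1) = (if even (m-1) then dd r ((m-1) div 2) else 0)" using less Suc True by simp
      have IH3: "cseq r 0 4 0 (m-3) = (if even (m-3) then dd r ((m-3) div 2) else 0)" using less Suc True by simp
      have IH2: "cseq r 0 4 0 (m-2) = (if even (m-2) then dd r ((m-2) div 2) else 0)" using less Suc True by simp
      have IH0: "cseq r 0 4 0 m = (if even m then dd r (m div 2) else 0)" using less Suc True by simp
      have cs: "cseq r 0 4 0 (Suc m) = ((2 * (of_int (int m) - 3) + 5 - 2 * of_nat r) * cseq r 0 4 0 (m-1)
              - (of_int (int m) - 3 + 1 - 2 * of_nat r) * cseq r 0 4 0 (m-3)) / of_nat (Suc m)"
        using True by (simp add: field_simps)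
      show ?thesis
      proof (cases "even m")
        case True
        then show ?thesis using cs IH1 IH3 Suc \<open>m\<ge>3\<close> by simp
      next
        case False
        define j where "j = (m - 3) div 2"
        have j: "m = 2*j+3" using False \<open>3 \<le> m\<close> unfolding j_def by presburger
        have i1: "cseq r 0 4 0 (m-1) = dd r (j+1)" using IH1 j by simp
        have i3: "cseq r 0 4 0 (m-3) = dd r j" using IH3 j by simp
        have "cseq r 0 4 0 (Suc m) = ((4 * of_nat j + 5 - 2 * of_nat r) * dd r (j+1) - (2 * of_nat j + 1 - 2 * of_nat r) * dd r j) / (2 * of_nat j + 4)"
          unfolding cs i1 i3 by (simp add: j algebra_simps)
        also have "\<dots> = dd r (j+2)" unfolding dd_rec[symmetric] by (simp add: add_pos_pos)
        finally have "cseq r 0 4 0 (Suc m) = dd r (j+2)" .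
        then show ?thesis using j Suc by simp
      qed
    next
      case False
      then have "m = 0 \<or> m = 1 \<or> m = 2" by auto
      then show ?thesis
      proof (elim disjE)
        assume "m = 0" then show ?thesis using Suc by simp
      next
        assume "m = 1" then show ?thesis using Suc dd_rec1[of r] by (simp add: dd_def field_simps)
      next
        assume "m = 2"
        moreover have "cseq r 0 4 0 1 = 0" using less Suc \<open>m = 2\<close> by simp
        moreover have "n = Suc (Suc (Suc 0))" using Suc \<open>m = 2\<close> by simp
        ultimately show ?thesis by simp
      qed
    qed
  qed
qed

definition gp :: "nat \<Rightarrow> rat \<Rightarrow> bool" where
  "gp p x \<longleftrightarrow> (\<exists>u v. v \<noteq> 0 \<and> x = of_int u / of_int v \<and> \<not> int p dvd u \<and> \<not> int p dvd v)"

lemma gp_nonzero_mod: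
  assumes p: "prime p" and g: "gp p x" shows "nonzero_mod p x"
proof -
  obtain u v where uv: "v \<noteq> 0" "x = of_int u / of_int v" "\<not> int p dvd u" "\<not> int p dvd v"
    using g unfolding gp_def by blast
  obtain a b where q: "quotient_of x = (a, b)" by (cases "quotient_of x") auto
  have b0: "b > 0" using quotient_of_denom_pos[OF q] .
  have cop: "coprime a b" using quotient_of_coprime[OF q] .
  have xab: "x = of_int a / of_int b" using quotient_of_div[OF q] .
  have "of_int u / of_int v = (of_int a / of_int b :: rat)" using uv xab by simp
  then have "of_int (u * b) = (of_int (a * v) :: rat)" using b0 uv(1) by (simp add: frac_eq_eq)
  then have e: "u * b = a * v" by (simp only: of_int_eq_iff)
  have pp: "prime (int p)" using p by simp
  have na: "\<not> int p dvd a"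
  proof
    assume "int p dvd a"
    then have "int p dvd u * b" using e by simp
    then have "int p dvd b" using pp uv(3) prime_dvd_mult_iff by blast
    then show False using \<open>int p dvd a\<close> cop pp
      by (meson coprime_common_divisor not_prime_unit)
  qed
  have nb: "\<not> int p dvd b"
  proof
    assume "int p dvd b"
    then have "int p dvd u * b" by simp
    then have "int p dvd a * v" using e by simp
    then have "int p dvd a" using pp uv(4) prime_dvd_mult_iff by blast
    then show False using \<open>int p dvd b\<close> cop pp
      by (meson coprime_common_divisor not_prime_unit)
  qed
  show ?thesis unfolding nonzero_mod_def q using na nb by simp
qed

lemma gp_mult: assumes "prime p" "gp p x" "gp p y" shows "gp p (x * y)"
proof -
  obtain u v where uv: "v \<noteq> 0" "x = of_int u / of_int v" "\<not> int p dvd u" "\<not> int p dvd v"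
    using assms(2) unfolding gp_def by blast
  obtain u' v' where uv': "v' \<noteq> 0" "y = of_int u' / of_int v'" "\<not> int p dvd u'" "\<not> int p dvd v'"
    using assms(3) unfolding gp_def by blast
  have pp: "prime (int p)" using assms(1) by simp
  show ?thesis unfolding gp_def
    apply (rule exI[of _ "u * u'"], rule exI[of _ "v * v'"])
    using uv uv' pp by (simp add: prime_dvd_mult_iff)
qed

lemma gp_inverse: assumes "gp p x" shows "gp p (inverse x)"
proof -
  obtain u v where uv: "v \<noteq> 0" "x = of_int u / of_int v" "\<not> int p dvd u" "\<not> int p dvd v"
    using assms unfolding gp_def by blast
  have "u \<noteq> 0" using uv(3) by auto
  show ?thesis unfolding gp_def
    apply (rule exI[of _ v], rule exI[of _ u]) using uv \<open>u \<noteq> 0\<close> by simp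
qed

lemma gp_divide: assumes "prime p" "gp p x" "gp p y" shows "gp p (x / y)"
  using gp_mult[OF assms(1,2) gp_inverse[OF assms(3)]] by (simp add: divide_inverse)

lemma gp_int: assumes "\<not> int p dvd n" "prime p" shows "gp p (of_int n)"
  unfolding gp_def using assms prime_gt_1_nat[OF assms(2)] by (rule_tac exI[of _ n], rule_tac exI[of _ 1]) simp

lemma gp_nat: assumes "\<not> p dvd n" "prime p" shows "gp p (of_nat n)"
  using gp_int[of p "int n"] assms by simp

lemma gp_uminus: assumes "gp p x" shows "gp p (- x)"
proof -
  obtain u v where uv: "v \<noteq> 0" "x = of_int u / of_int v" "\<not> int p dvd u" "\<not> int p dvd v"
    using assms unfolding gp_def by blast
  show ?thesis unfolding gp_def
    apply (rule exI[of _ "- u"], rule exI[of _ v]) using uv by simp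
qed

lemma gp_prod: fixes s :: nat assumes "prime p" "\<And>i. i < s \<Longrightarrow> gp p (f i)" shows "gp p (\<Prod>i<s. f i)"
  using assms(2)
proof (induction s)
  case 0 then show ?case using gp_int[of p 1] assms(1) prime_gt_1_nat[OF assms(1)]
    by simp
next
  case (Suc s) then show ?case using gp_mult[OF assms(1)] by simp
qed

lemma gch_split: fixes y :: rat
  shows "y gchoose (b + j) = (y gchoose b) * ((y - of_nat b) gchoose j) / of_nat (b + j choose b)"
proof -
  have "fact b * fact j * (b+j choose b) = (fact (b+j) :: nat)" using binomial_fact_lemma[of b "b+j"] by simp
  then have f: "(fact b * fact j * of_nat (b+j choose b) :: rat) = fact (b+j)" by (metis of_nat_fact of_nat_mult)
  have sh: "(\<Prod>i=b..<b+j. y - of_nat i) = (\<Prod>i=0..<j. (y - of_nat b) - of_nat i)"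
    using prod.shift_bounds_nat_ivl[of "\<lambda>i. y - of_nat i" 0 b j] by (simp add: algebra_simps)
  have p: "(\<Prod>i=0..<b+j. y - of_nat i) = (\<Prod>i=0..<b. y - of_nat i) * (\<Prod>i=0..<j. (y - of_nat b) - of_nat i)"
    using prod.atLeastLessThan_concat[of 0 b "b+j" "\<lambda>i. y - of_nat i"] sh by simp
  have "fact (b+j) * (y gchoose (b+j)) = (fact b * (y gchoose b)) * (fact j * ((y - of_nat b) gchoose j))"
    unfolding gbinomial_mult_fact p ..
  then have "(fact b * fact j * of_nat (b+j choose b)) * (y gchoose (b+j)) = (fact b * fact j) * ((y gchoose b) * ((y - of_nat b) gchoose j))"
    unfolding f by (simp add: ac_simps)
  moreover have "(fact b * fact j :: rat) \<noteq> 0" by simp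
  moreover have "(of_nat (b+j choose b) :: rat) \<noteq> 0" by simp
  ultimately show ?thesis by (simp add: field_simps)
qed

lemma det_scale: fixes M :: "rat mat"
  assumes M: "M \<in> carrier_mat n n"
  shows "det (mat n n (\<lambda>(i,j). f i * g j * M $$ (i,j))) = (\<Prod>i<n. f i) * (\<Prod>j<n. g j) * det M"
proof -
  let ?U = "{0..<n}"
  have "det (mat n n (\<lambda>(i,j). f i * g j * M $$ (i,j))) =
    (\<Sum>p\<in>{p. p permutes ?U}. signof p * (\<Prod>i=0..<n. f i * g (p i) * M $$ (i, p i)))"
    by (subst det_def'[of _ n]) (auto intro!: sum.cong prod.cong simp: permutes_in_image)
  also have "\<dots> = (\<Sum>p\<in>{p. p permutes ?U}. (\<Prod>i<n. f i) * (\<Prod>j<n. g j) * (signof p * (\<Prod>i=0..<n. M $$ (i, p i))))"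
  proof (rule sum.cong[OF refl])
    fix p assume "p \<in> {p. p permutes ?U}"
    then have pp: "p permutes ?U" by simp
    have "(\<Prod>i=0..<n. g (p i)) = (\<Prod>i=0..<n. g i)"
      using prod.permute[OF pp, of g] by (simp add: comp_def)
    then show "signof p * (\<Prod>i=0..<n. f i * g (p i) * M $$ (i, p i)) = (\<Prod>i<n. f i) * (\<Prod>j<n. g j) * (signof p * (\<Prod>i=0..<n. M $$ (i, p i)))"
      by (simp add: prod.distrib atLeast0LessThan)
  qed
  also have "\<dots> = (\<Prod>i<n. f i) * (\<Prod>j<n. g j) * det M"
    by (subst det_def'[OF M]) (simp add: sum_distrib_left)
  finally show ?thesis .
qed

lemma det_perm_rc: fixes A :: "rat mat"
  assumes A: "A \<in> carrier_mat n n" and p: "p permutes {0..<n}" and q: "q permutes {0..<n}"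
  shows "det (mat n n (\<lambda>(i,j). A $$ (p i, q j))) = signof p * signof q * det A"
proof -
  define B where "B = mat n n (\<lambda>(i,j). A $$ (p i, j))"
  have B: "B \<in> carrier_mat n n" unfolding B_def by simp
  have dB: "det B = signof p * det A" unfolding B_def by (rule det_permute_rows[OF A p])
  define C where "C = mat n n (\<lambda>(j,i). (transpose_mat B) $$ (q j, i))"
  have "det C = signof q * det (transpose_mat B)" unfolding C_def by (rule det_permute_rows[OF _ q]) (use B in simp)
  also have "det (transpose_mat B) = det B" using det_transpose[OF B] .
  finally have dC: "det C = signof q * det B" .
  have "mat n n (\<lambda>(i,j). A $$ (p i, q j)) = transpose_mat C"
  proof (rule eq_matI)
    fix i j assume ij: "i < dim_row (transpose_mat C)" "j < dim_col (transpose_mat C)"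
    then have "i < n" "j < n" unfolding C_def by auto
    moreover have "q j < n" using permutes_in_image[OF q] \<open>j < n\<close> by simp
    moreover have "p i < n" using permutes_in_image[OF p] \<open>i < n\<close> by simp
    ultimately show "mat n n (\<lambda>(i,j). A $$ (p i, q j)) $$ (i, j) = transpose_mat C $$ (i, j)"
      unfolding C_def B_def by simp
  qed (auto simp: C_def)
  then have "det (mat n n (\<lambda>(i,j). A $$ (p i, q j))) = det C" using det_transpose[of C n] by (simp add: C_def)
  then show ?thesis using dC dB by simp
qed

lemma det_unit_lower: fixes L :: "rat mat"
  assumes L: "L \<in> carrier_mat n n" and z: "\<And>i j. i < j \<Longrightarrow> j < n \<Longrightarrow> L $$ (i,j) = 0"
  and d: "\<And>i. i < n \<Longrightarrow> L $$ (i,i) = 1"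
  shows "det L = 1"
  using det_lower_triangular[OF z L] L d by (simp add: prod_list_diag_prod)

lemma det_unit_upper: fixes L :: "rat mat"
  assumes L: "L \<in> carrier_mat n n" and z: "\<And>i j. j < i \<Longrightarrow> i < n \<Longrightarrow> L $$ (i,j) = 0"
  and d: "\<And>i. i < n \<Longrightarrow> L $$ (i,i) = 1"
  shows "det L = 1"
proof -
  have "upper_triangular L" using z L unfolding upper_triangular_def by auto
  then show ?thesis using det_upper_triangular[OF _ L] L d by (simp add: prod_list_diag_prod)
qed

definition Lm :: "nat \<Rightarrow> rat mat" where "Lm s = mat s s (\<lambda>(i,l). of_nat (i choose l))"

lemma det_Lm: "det (Lm s) = 1"
  by (rule det_unit_lower[of _ s]) (auto simp: Lm_def)

lemma vander: fixes y :: rat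
  shows "(\<Sum>k=0..n. of_nat (i choose k) * (y gchoose (n - k))) = (of_nat i + y) gchoose n"
  using gbinomial_Vandermonde[of "of_nat i" y n] by (simp add: binomial_gbinomial)

definition TB :: "rat \<Rightarrow> nat \<Rightarrow> nat \<Rightarrow> rat mat" where
  "TB x b s = mat s s (\<lambda>(i,j). x gchoose (b + j - i))"

lemma sum_Lm_restrict:
  assumes "i < s" "\<And>l. l \<le> i \<Longrightarrow> l < s \<Longrightarrow> f l = g l"
  shows "(\<Sum>l\<in>{0..<s}. of_nat (i choose l) * f l) = (\<Sum>l=0..i. of_nat (i choose l) * (g l :: rat))"
proof -
  have "(\<Sum>l\<in>{0..<s}. of_nat (i choose l) * f l) = (\<Sum>l=0..i. of_nat (i choose l) * f l)"
    by (rule sum.mono_neutral_right) (use assms(1) in auto)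
  also have "\<dots> = (\<Sum>l=0..i. of_nat (i choose l) * g l)"
    by (rule sum.cong) (use assms in auto)
  finally show ?thesis .
qed

lemma LTB: assumes "s \<le> b + 1"
  shows "Lm s * TB x b s = mat s s (\<lambda>(i,j). (x + of_nat i) gchoose (b + j))"
proof (rule eq_matI)
  fix i j assume ij: "i < dim_row (mat s s (\<lambda>(i,j). (x + of_nat i) gchoose (b + j)))"
    "j < dim_col (mat s s (\<lambda>(i,j). (x + of_nat i) gchoose (b + j)))"
  then have i: "i < s" and j: "j < s" by auto
  have "(Lm s * TB x b s) $$ (i,j) = (\<Sum>l\<in>{0..<s}. of_nat (i choose l) * (x gchoose (b + j - l)))"
    using i j by (simp add: Lm_def TB_def scalar_prod_def)
  also have "\<dots> = (\<Sum>l=0..i. of_nat (i choose l) * (x gchoose (b + j - l)))"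
    by (rule sum_Lm_restrict[OF i]) simp
  also have "\<dots> = (\<Sum>l=0..b+j. of_nat (i choose l) * (x gchoose (b + j - l)))"
    by (rule sum.mono_neutral_left) (use i assms in auto)
  also have "\<dots> = (of_nat i + x) gchoose (b + j)" by (rule vander)
  finally show "(Lm s * TB x b s) $$ (i,j) = mat s s (\<lambda>(i,j). (x + of_nat i) gchoose (b + j)) $$ (i,j)"
    using i j by (simp add: add.commute)
qed (auto simp: Lm_def TB_def)

definition Vm :: "rat \<Rightarrow> nat \<Rightarrow> rat mat" where
  "Vm y s = mat s s (\<lambda>(i,j). (y + of_nat i) gchoose j)"

definition Um :: "rat \<Rightarrow> nat \<Rightarrow> rat mat" where
  "Um y s = mat s s (\<lambda>(l,j). if l \<le> j then y gchoose (j - l) else 0)"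

lemma LU: "Lm s * Um y s = Vm y s"
proof (rule eq_matI)
  fix i j assume ij: "i < dim_row (Vm y s)" "j < dim_col (Vm y s)"
  then have i: "i < s" and j: "j < s" by (auto simp: Vm_def)
  have "(Lm s * Um y s) $$ (i,j) = (\<Sum>l\<in>{0..<s}. of_nat (i choose l) * (if l \<le> j then y gchoose (j - l) else 0))"
    using i j by (simp add: Lm_def Um_def scalar_prod_def)
  also have "\<dots> = (\<Sum>l=0..j. of_nat (i choose l) * (if l \<le> j then y gchoose (j - l) else 0))"
    by (rule sum.mono_neutral_right) (use j in auto)
  also have "\<dots> = (\<Sum>l=0..j. of_nat (i choose l) * (y gchoose (j - l)))"
    by (rule sum.cong) auto
  also have "\<dots> = (of_nat i + y) gchoose j" by (rule vander)
  finally show "(Lm s * Um y s) $$ (i,j) = Vm y s $$ (i,j)"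
    using i j by (simp add: Vm_def add.commute)
qed (auto simp: Lm_def Um_def Vm_def)

lemma det_Vm: "det (Vm y s) = 1"
proof -
  have u: "det (Um y s) = 1" by (rule det_unit_upper[of _ s]) (auto simp: Um_def)
  have c1: "Lm s \<in> carrier_mat s s" by (simp add: Lm_def)
  have c2: "Um y s \<in> carrier_mat s s" by (simp add: Um_def)
  show ?thesis unfolding LU[symmetric] using det_mult[OF c1 c2] det_Lm u by simp
qed

lemma det_TB: assumes "s \<le> b + 1"
  shows "det (TB x b s) = (\<Prod>i<s. (x + of_nat i) gchoose b) * (\<Prod>j<s. 1 / of_nat (b + j choose b))"
proof -
  have c1: "Lm s \<in> carrier_mat s s" by (simp add: Lm_def)
  have c2: "TB x b s \<in> carrier_mat s s" by (simp add: TB_def)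
  have "det (Lm s * TB x b s) = det (TB x b s)" using det_mult[OF c1 c2] det_Lm by simp
  moreover have "mat s s (\<lambda>(i,j). (x + of_nat i) gchoose (b + j)) =
     mat s s (\<lambda>(i,j). ((x + of_nat i) gchoose b) * (1 / of_nat (b + j choose b)) * Vm (x - of_nat b) s $$ (i,j))"
    by (rule eq_matI) (auto simp: Vm_def gch_split diff_add_eq)
  moreover have "det (mat s s (\<lambda>(i,j). ((x + of_nat i) gchoose b) * (1 / of_nat (b + j choose b)) * Vm (x - of_nat b) s $$ (i,j)))
     = (\<Prod>i<s. (x + of_nat i) gchoose b) * (\<Prod>j<s. 1 / of_nat (b + j choose b)) * det (Vm (x - of_nat b) s)"
    by (rule det_scale) (simp add: Vm_def)
  ultimately show ?thesis using LTB[OF assms, of x] det_Vm by simp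
qed

lemma gp_neg1_pow: assumes "prime p" shows "gp p ((- 1 :: rat) ^ n)"
proof (cases "even n")
  case True then show ?thesis using gp_int[of p 1] assms prime_gt_1_nat[OF assms] by simp
next
  case False then show ?thesis using gp_uminus[OF gp_int[of p 1]] assms prime_gt_1_nat[OF assms] by simp
qed

lemma gp_signof: assumes "prime p" shows "gp p (signof q)"
  by (cases q rule: sign_cases) (use gp_int[of p 1] gp_int[of p "-1"] assms prime_gt_1_nat[OF assms] in auto)

lemma gp_fact: assumes "prime p" "n < p" shows "gp p (fact n)"
proof -
  have "\<not> p dvd fact n" using prime_dvd_fact_iff[OF assms(1)] assms(2) by simp
  then show ?thesis using gp_nat[of p "fact n"] assms(1) by (simp add: of_nat_fact)
qed

lemma gp_choose: assumes "prime p" "b + j < p" shows "gp p (of_nat (b + j choose b))"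
proof -
  have "fact b * fact j * (b+j choose b) = (fact (b+j) :: nat)" using binomial_fact_lemma[of b "b+j"] by simp
  moreover have "\<not> p dvd fact (b+j)" using prime_dvd_fact_iff[OF assms(1)] assms(2) by simp
  ultimately have "\<not> p dvd (b+j choose b)" by (metis dvd_mult)
  then show ?thesis using gp_nat assms(1) by blast
qed

lemma not_dvd_small: fixes z :: int assumes "odd z" "\<bar>z\<bar> < int p" shows "\<not> int p dvd z"
proof
  assume "int p dvd z"
  moreover have "z \<noteq> 0" using assms(1) by auto
  ultimately have "\<bar>int p\<bar> \<le> \<bar>z\<bar>" using dvd_imp_le_int by blast
  then show False using assms(2) by simp
qed

lemma gp_half: assumes "prime p" "odd p" "odd z" "\<bar>z\<bar> < int p" shows "gp p (of_int z / 2)"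
proof -
  have "\<not> int p dvd 2"
  proof
    assume "int p dvd 2" then have "p dvd 2" by (metis int_dvd_int_iff of_nat_numeral)
    then have "p \<le> 2" by (rule dvd_imp_le) simp
    moreover have "p \<noteq> 2" using assms(2) by auto
    moreover have "p > 1" using prime_gt_1_nat[OF assms(1)] .
    ultimately show False by simp
  qed
  then show ?thesis unfolding gp_def using not_dvd_small[OF assms(3,4)]
    by (rule_tac exI[of _ z], rule_tac exI[of _ 2]) simp
qed

lemma gp_gch: assumes p: "prime p" "odd p" and bp: "b < p"
  and bd: "\<And>t. t < b \<Longrightarrow> \<bar>2 * int r + 2 * int i - 2 * int t - 1\<bar> < int p"
  shows "gp p ((aa r + of_nat i) gchoose b)"
proof -
  have "fact b * ((aa r + of_nat i) gchoose b) = (\<Prod>t = 0..<b. aa r + of_nat i - of_nat t)"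
    by (rule gbinomial_mult_fact)
  also have "\<dots> = (\<Prod>t<b. of_int (2 * int r + 2 * int i - 2 * int t - 1) / 2)"
    unfolding atLeast0LessThan by (rule prod.cong) (simp_all add: aa_def)
  finally have e0: "fact b * ((aa r + of_nat i) gchoose b) = (\<Prod>t<b. of_int (2 * int r + 2 * int i - 2 * int t - 1) / 2)" .
  have e: "(aa r + of_nat i) gchoose b = (\<Prod>t<b. of_int (2 * int r + 2 * int i - 2 * int t - 1) / 2) / fact b"
    unfolding e0[symmetric] by simp
  have "gp p (\<Prod>t<b. of_int (2 * int r + 2 * int i - 2 * int t - 1) / 2)"
    by (rule gp_prod[OF p(1)], rule gp_half[OF p]) (use bd in auto)
  then show ?thesis unfolding e using gp_divide[OF p(1)] gp_fact[OF p(1) bp] by blast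
qed

lemma gp_det_TB: assumes p: "prime p" "odd p" and sb: "s \<le> b + 1" and bs: "b + s \<le> p"
  and c1: "2 * r + 2 * s < p + 3" and c2: "2 * b < p + 2 * r + 1"
  shows "gp p (det (TB (aa r) b s))"
proof -
  have g1: "gp p (\<Prod>i<s. (aa r + of_nat i) gchoose b)"
  proof (rule gp_prod[OF p(1)])
    fix i assume i: "i < s"
    show "gp p ((aa r + of_nat i) gchoose b)"
    proof (rule gp_gch[OF p])
      show "b < p" using bs sb i by linarith
      fix t assume "t < b"
      then show "\<bar>2 * int r + 2 * int i - 2 * int t - 1\<bar> < int p" using i c1 c2 by linarith
    qed
  qed
  have g2: "gp p (\<Prod>j<s. 1 / of_nat (b + j choose b))"
  proof (rule gp_prod[OF p(1)])
    fix j assume "j < s"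
    then have "gp p (of_nat (b + j choose b))" using gp_choose[OF p(1)] bs by simp
    then show "gp p (1 / of_nat (b + j choose b))" using gp_inverse by (simp add: divide_inverse)
  qed
  show ?thesis unfolding det_TB[OF sb] using gp_mult[OF p(1) g1 g2] .
qed

lemma permutes_from_inj: fixes f :: "nat \<Rightarrow> nat"
  assumes "\<And>u. u < k \<Longrightarrow> f u < k" "inj_on f {0..<k}" "\<And>u. u \<ge> k \<Longrightarrow> f u = u"
  shows "f permutes {0..<k}"
proof (rule bij_imp_permutes)
  have "f ` {0..<k} \<subseteq> {0..<k}" using assms(1) by auto
  then have "f ` {0..<k} = {0..<k}" using endo_inj_surj[of "{0..<k}" f] assms(2) by simp
  then show "bij_betw f {0..<k} {0..<k}" using assms(2) unfolding bij_betw_def by simp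
  fix x assume "x \<notin> {0..<k}" then show "f x = x" using assms(3) by simp
qed

lemma block_gp:
  fixes F :: "nat \<Rightarrow> nat \<Rightarrow> rat" and \<sigma> \<tau> :: "nat \<Rightarrow> nat"
  assumes p: "prime p" and hk: "h \<le> k"
  and sig: "\<sigma> permutes {0..<k}" and tau: "\<tau> permutes {0..<k}"
  and B1: "\<And>u v. u < h \<Longrightarrow> v < h \<Longrightarrow> F (\<sigma> u) (\<tau> v) = (-1)^u * (-1)^(bA+v) * (x gchoose (bA + v - u))"
  and B2: "\<And>u v. u < k-h \<Longrightarrow> v < k-h \<Longrightarrow> F (\<sigma> (h+u)) (\<tau> (h+v)) = (-1)^u * (-1)^(bB+v) * (x gchoose (bB + v - u))"
  and Z1: "\<And>u v. u < h \<Longrightarrow> h \<le> v \<Longrightarrow> v < k \<Longrightarrow> F (\<sigma> u) (\<tau> v) = 0"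
  and Z2: "\<And>u v. h \<le> u \<Longrightarrow> u < k \<Longrightarrow> v < h \<Longrightarrow> F (\<sigma> u) (\<tau> v) = 0"
  and g1: "gp p (det (TB x bA h))" and g2: "gp p (det (TB x bB (k-h)))"
  shows "gp p (det (mat k k (\<lambda>(i,j). F i j)))"
proof -
  define A where "A = mat k k (\<lambda>(i,j). F i j)"
  have A: "A \<in> carrier_mat k k" unfolding A_def by simp
  define T1 where "T1 = mat h h (\<lambda>(i,j). (\<lambda>u. (-1::rat)^u) i * (\<lambda>v. (-1)^(bA+v)) j * TB x bA h $$ (i,j))"
  define T2 where "T2 = mat (k-h) (k-h) (\<lambda>(i,j). (\<lambda>u. (-1::rat)^u) i * (\<lambda>v. (-1)^(bB+v)) j * TB x bB (k-h) $$ (i,j))"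
  have T1: "T1 \<in> carrier_mat h h" unfolding T1_def by simp
  have T2: "T2 \<in> carrier_mat (k-h) (k-h)" unfolding T2_def by simp
  have Beq: "mat k k (\<lambda>(i,j). A $$ (\<sigma> i, \<tau> j)) = four_block_mat T1 (0\<^sub>m h (k-h)) (0\<^sub>m (k-h) h) T2"
  proof (rule eq_matI)
    fix i j assume "i < dim_row (four_block_mat T1 (0\<^sub>m h (k-h)) (0\<^sub>m (k-h) h) T2)"
      "j < dim_col (four_block_mat T1 (0\<^sub>m h (k-h)) (0\<^sub>m (k-h) h) T2)"
    then have i: "i < k" and j: "j < k" using T1 T2 hk by auto
    have si: "\<sigma> i < k" using permutes_in_image[OF sig] i by simp
    have tj: "\<tau> j < k" using permutes_in_image[OF tau] j by simp
    have L: "mat k k (\<lambda>(i,j). A $$ (\<sigma> i, \<tau> j)) $$ (i,j) = F (\<sigma> i) (\<tau> j)"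
      using i j si tj by (simp add: A_def)
    have R: "four_block_mat T1 (0\<^sub>m h (k-h)) (0\<^sub>m (k-h) h) T2 $$ (i,j) =
      (if i < h then if j < h then T1 $$ (i,j) else 0 else if j < h then 0 else T2 $$ (i - h, j - h))"
      using i j hk T1 T2 by simp
    show "mat k k (\<lambda>(i,j). A $$ (\<sigma> i, \<tau> j)) $$ (i,j) = four_block_mat T1 (0\<^sub>m h (k-h)) (0\<^sub>m (k-h) h) T2 $$ (i,j)"
      unfolding L R
    proof (cases "i < h"; cases "j < h")
      assume "i < h" "j < h"
      then show "F (\<sigma> i) (\<tau> j) = (if i < h then if j < h then T1 $$ (i,j) else 0 else if j < h then 0 else T2 $$ (i - h, j - h))"
        using B1 by (simp add: T1_def TB_def)
    next
      assume "i < h" "\<not> j < h"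
      then show "F (\<sigma> i) (\<tau> j) = (if i < h then if j < h then T1 $$ (i,j) else 0 else if j < h then 0 else T2 $$ (i - h, j - h))"
        using Z1 j by simp
    next
      assume "\<not> i < h" "j < h"
      then show "F (\<sigma> i) (\<tau> j) = (if i < h then if j < h then T1 $$ (i,j) else 0 else if j < h then 0 else T2 $$ (i - h, j - h))"
        using Z2 i by simp
    next
      assume a: "\<not> i < h" "\<not> j < h"
      have e: "h + (i-h) = i" "h + (j-h) = j" using a by auto
      have "F (\<sigma> (h + (i-h))) (\<tau> (h + (j-h))) = (-1)^(i-h) * (-1)^(bB+(j-h)) * (x gchoose (bB + (j-h) - (i-h)))"
        using B2[of "i-h" "j-h"] i j a by simp
      then have "F (\<sigma> i) (\<tau> j) = (-1)^(i-h) * (-1)^(bB+(j-h)) * (x gchoose (bB + (j-h) - (i-h)))"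
        unfolding e .
      then show "F (\<sigma> i) (\<tau> j) = (if i < h then if j < h then T1 $$ (i,j) else 0 else if j < h then 0 else T2 $$ (i - h, j - h))"
        using a i j by (simp only: T2_def TB_def index_mat) simp
    qed
  qed (use T1 T2 hk in auto)
  have "det (four_block_mat T1 (0\<^sub>m h (k-h)) (0\<^sub>m (k-h) h) T2) = det T1 * det T2"
    by (rule det_four_block_mat_upper_right_zero[OF T1 refl _ T2]) simp
  moreover have "det T1 = (\<Prod>i<h. (-1::rat)^i) * (\<Prod>j<h. (-1)^(bA+j)) * det (TB x bA h)"
    unfolding T1_def by (rule det_scale) (simp add: TB_def)
  moreover have "det T2 = (\<Prod>i<k-h. (-1::rat)^i) * (\<Prod>j<k-h. (-1)^(bB+j)) * det (TB x bB (k-h))"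
    unfolding T2_def by (rule det_scale) (simp add: TB_def)
  ultimately have "gp p (det (mat k k (\<lambda>(i,j). A $$ (\<sigma> i, \<tau> j))))"
    unfolding Beq using g1 g2 gp_mult[OF p] gp_prod[OF p] gp_neg1_pow[OF p] by metis
  then have "gp p (signof \<sigma> * signof \<tau> * det A)" unfolding det_perm_rc[OF A sig tau] .
  moreover have "signof \<sigma> * signof \<tau> * det A / (signof \<sigma> * signof \<tau>) = det A"
    by (simp add: sign_def)
  moreover have "gp p (signof \<sigma> * signof \<tau>)" using gp_mult[OF p gp_signof[OF p] gp_signof[OF p]] .
  ultimately show ?thesis unfolding A_def using gp_divide[OF p] by metis
qed

definition hh :: "nat \<Rightarrow> nat" where "hh k = (k + 1) div 2"
definition sig :: "nat \<Rightarrow> nat \<Rightarrow> nat" where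
  "sig k u = (if u < hh k then 2*u else if u < k then 2*(u - hh k) + 1 else u)"
definition tauE :: "nat \<Rightarrow> nat \<Rightarrow> nat" where
  "tauE k u = (if u < hh k then 2*u + 1 else if u < k then 2*(u - hh k) else u)"

lemma sig_perm: "sig k permutes {0..<k}"
proof (rule permutes_from_inj)
  fix u assume "u < k" then show "sig k u < k" unfolding sig_def hh_def by presburger
next
  show "inj_on (sig k) {0..<k}" unfolding inj_on_def sig_def hh_def by auto presburger+
next
  fix u assume "k \<le> u" then show "sig k u = u" unfolding sig_def hh_def by auto
qed

lemma tauE_perm: assumes "even k" shows "tauE k permutes {0..<k}"
proof (rule permutes_from_inj)
  fix u assume "u < k" then show "tauE k u < k" using assms unfolding tauE_def hh_def by presburger
next
  show "inj_on (tauE k) {0..<k}" unfolding inj_on_def tauE_def hh_def by auto presburger+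
next
  fix u assume "k \<le> u" then show "tauE k u = u" unfolding tauE_def hh_def by auto
qed

lemma neg1: "u \<le> m \<Longrightarrow> (-1::rat)^(m-u) = (-1)^u * (-1)^m"
proof -
  assume "u \<le> m"
  then have "(-1::rat)^m = (-1)^(m-u) * (-1)^u" by (metis le_add_diff_inverse2 power_add)
  then have "(-1::rat)^u * (-1)^m = (-1)^(m-u) * ((-1)^u * (-1)^u)" by (simp add: ac_simps)
  also have "(-1::rat)^u * (-1)^u = 1" by (simp add: power_add[symmetric])
  finally show ?thesis by simp
qed

lemma entry_form: assumes "N + j - i = 2*(b+v-u)" "u \<le> b + v"
  shows "cseq r 0 4 0 (N + j - i) = (-1)^u * (-1)^(b+v) * (aa r gchoose (b+v-u))"
  unfolding assms(1) cseq_val dd_def using neg1[OF assms(2)] by simp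

lemma entry_zero: assumes "odd (N + j - i)" shows "cseq r 0 4 0 (N + j - i) = 0"
  using assms by (simp add: cseq_val)

lemma Pk_mat: assumes "r \<ge> 1"
  shows "Pk r k 0 4 0 = det (mat k k (\<lambda>(i,j). cseq r 0 4 0 (k + 2*r - 1 + j - i)))"
proof -
  have "mat k k (\<lambda>(i, j). cc r 0 4 0 (int k + 2 * int r - 1 + int j - int i)) = mat k k (\<lambda>(i,j). cseq r 0 4 0 (k + 2*r - 1 + j - i))"
  proof (rule eq_matI)
    fix i j assume "i < dim_row (mat k k (\<lambda>(i,j). cseq r 0 4 0 (k + 2*r - 1 + j - i)))"
      "j < dim_col (mat k k (\<lambda>(i,j). cseq r 0 4 0 (k + 2*r - 1 + j - i)))"
    then have i: "i < k" and j: "j < k" by auto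
    have e: "nat (int k + 2 * int r - 1 + int j - int i) = k + 2*r - 1 + j - i" using i assms by linarith
    have nn: "\<not> int k + 2 * int r - 1 + int j - int i < 0" using i assms by linarith
    have "mat k k (\<lambda>(i, j). cc r 0 4 0 (int k + 2 * int r - 1 + int j - int i)) $$ (i,j) = cc r 0 4 0 (int k + 2 * int r - 1 + int j - int i)"
      using i j by simp
    also have "\<dots> = cseq r 0 4 0 (nat (int k + 2 * int r - 1 + int j - int i))" unfolding cc_def using nn by simp
    also have "\<dots> = cseq r 0 4 0 (k + 2*r - 1 + j - i)" unfolding e ..
    also have "\<dots> = mat k k (\<lambda>(i,j). cseq r 0 4 0 (k + 2*r - 1 + j - i)) $$ (i,j)" using i j by simp
    finally show "mat k k (\<lambda>(i, j). cc r 0 4 0 (int k + 2 * int r - 1 + int j - int i)) $$ (i,j) = mat k k (\<lambda>(i,j). cseq r 0 4 0 (k + 2*r - 1 + j - i)) $$ (i,j)" .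
  qed auto
  then show ?thesis unfolding Pk_def by simp
qed

theorem proposition4p3:
  fixes r k p :: nat
  assumes "r \<ge> 1" and "k \<ge> 1"
    and "prime p" and "odd p" and "p > k + 2 * r - 2"
  shows "nonzero_mod p (Pk r k 0 4 0)"
proof -
  note pr = assms(3,4)
  define N where "N = k + 2*r - 1"
  define F where "F = (\<lambda>i j. cseq r 0 4 0 (N + j - i))"
  have P: "Pk r k 0 4 0 = det (mat k k (\<lambda>(i,j). F i j))"
    unfolding Pk_mat[OF assms(1)] F_def N_def ..
  define h where "h = hh k"
  have hk: "h \<le> k" unfolding h_def hh_def by simp
  have Nv: "N = k + 2*r - 1" "r \<ge> 1" "k \<ge> 1" "p > k + 2 * r - 2" using N_def assms by auto
  have "gp p (det (mat k k (\<lambda>(i,j). F i j)))"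
  proof (cases "odd k")
    case True
    define b where "b = N div 2"
    have hv: "2*h = k + 1" using True unfolding h_def hh_def by presburger
    have bv: "2*b = N" using True assms(1) unfolding b_def N_def by presburger
    show ?thesis
    proof (rule block_gp[where bA = b and bB = b and x = "aa r", OF assms(3) hk sig_perm sig_perm])
      fix u v assume uv: "u < h" "v < h"
      then have s: "sig k u = 2*u" "sig k v = 2*v" unfolding sig_def h_def by auto
      have a1: "N + 2*v - 2*u = 2*(b+v-u)" "u \<le> b + v" using uv hv bv Nv by arith+
      show "F (sig k u) (sig k v) = (-1)^u * (-1)^(b+v) * (aa r gchoose (b + v - u))"
        unfolding F_def s by (rule entry_form[OF a1])
    next
      fix u v assume uv: "u < k - h" "v < k - h"
      then have s: "sig k (h+u) = 2*u+1" "sig k (h+v) = 2*v+1" unfolding sig_def h_def by auto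
      have a1: "N + (2*v+1) - (2*u+1) = 2*(b+v-u)" "u \<le> b + v" using uv hv bv Nv by arith+
      show "F (sig k (h+u)) (sig k (h+v)) = (-1)^u * (-1)^(b+v) * (aa r gchoose (b + v - u))"
        unfolding F_def s by (rule entry_form[OF a1])
    next
      fix u v assume uv: "u < h" "h \<le> v" "v < k"
      then have s: "sig k u = 2*u" "sig k v = 2*(v-h)+1" unfolding sig_def h_def by auto
      have "N + (2*(v-h)+1) - 2*u = 2*(b + (v-h) - u) + 1" using uv hv bv Nv by arith
      then have "odd (N + (2*(v-h)+1) - 2*u)" by simp
      then show "F (sig k u) (sig k v) = 0" unfolding F_def s by (rule entry_zero)
    next
      fix u v assume uv: "h \<le> u" "u < k" "v < h"
      then have s: "sig k u = 2*(u-h)+1" "sig k v = 2*v" unfolding sig_def h_def by auto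
      have "N + 2*v - (2*(u-h)+1) = 2*(b + v - (u-h) - 1) + 1" using uv hv bv Nv by arith
      then have "odd (N + 2*v - (2*(u-h)+1))" by simp
      then show "F (sig k u) (sig k v) = 0" unfolding F_def s by (rule entry_zero)
    next
      show "gp p (det (TB (aa r) b h))"
        by (rule gp_det_TB[OF pr]) (use hv bv Nv in arith)+
    next
      show "gp p (det (TB (aa r) b (k-h)))"
        by (rule gp_det_TB[OF pr]) (use hv bv Nv in arith)+
    qed
  next
    case False
    define b1 where "b1 = (N + 1) div 2"
    define b2 where "b2 = (N - 1) div 2"
    have hv: "2*h = k" using False unfolding h_def hh_def by presburger
    have b1v: "2*b1 = N + 1" using False assms(1) unfolding b1_def N_def by presburger
    have b2v: "2*b2 = N - 1" using False assms(1) unfolding b2_def N_def by presburger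
    have tp: "tauE k permutes {0..<k}" using tauE_perm False by simp
    show ?thesis
    proof (rule block_gp[where bA = b1 and bB = b2 and x = "aa r", OF assms(3) hk sig_perm tp])
      fix u v assume uv: "u < h" "v < h"
      then have s: "sig k u = 2*u" "tauE k v = 2*v+1" unfolding sig_def tauE_def h_def by auto
      have a1: "N + (2*v+1) - 2*u = 2*(b1+v-u)" "u \<le> b1 + v" using uv hv b1v Nv by arith+
      show "F (sig k u) (tauE k v) = (-1)^u * (-1)^(b1+v) * (aa r gchoose (b1 + v - u))"
        unfolding F_def s by (rule entry_form[OF a1])
    next
      fix u v assume uv: "u < k - h" "v < k - h"
      then have s: "sig k (h+u) = 2*u+1" "tauE k (h+v) = 2*v" unfolding sig_def tauE_def h_def by auto
      have a1: "N + 2*v - (2*u+1) = 2*(b2+v-u)" "u \<le> b2 + v" using uv hv b2v Nv by arith+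
      show "F (sig k (h+u)) (tauE k (h+v)) = (-1)^u * (-1)^(b2+v) * (aa r gchoose (b2 + v - u))"
        unfolding F_def s by (rule entry_form[OF a1])
    next
      fix u v assume uv: "u < h" "h \<le> v" "v < k"
      then have s: "sig k u = 2*u" "tauE k v = 2*(v-h)" unfolding sig_def tauE_def h_def by auto
      have "N + 2*(v-h) - 2*u = 2*(b2 + (v-h) - u) + 1" using uv hv b2v Nv by arith
      then have "odd (N + 2*(v-h) - 2*u)" by simp
      then show "F (sig k u) (tauE k v) = 0" unfolding F_def s by (rule entry_zero)
    next
      fix u v assume uv: "h \<le> u" "u < k" "v < h"
      then have s: "sig k u = 2*(u-h)+1" "tauE k v = 2*v+1" unfolding sig_def tauE_def h_def by auto
      have "N + (2*v+1) - (2*(u-h)+1) = 2*(b2 + v - (u-h)) + 1" using uv hv b2v Nv by arith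
      then have "odd (N + (2*v+1) - (2*(u-h)+1))" by simp
      then show "F (sig k u) (tauE k v) = 0" unfolding F_def s by (rule entry_zero)
    next
      show "gp p (det (TB (aa r) b1 h))"
        by (rule gp_det_TB[OF pr]) (use hv b1v Nv in arith)+
    next
      show "gp p (det (TB (aa r) b2 (k-h)))"
        by (rule gp_det_TB[OF pr]) (use hv b2v Nv in arith)+
    qed
  qed
  then show ?thesis unfolding P by (rule gp_nonzero_mod[OF assms(3)])
qed

end
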